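(* Let $\mathfrak g$ be a basic simple Lie superalgebra with an $\mathfrak{sl}_2$-triple $\{e,x,f\}$ giving a minimal grading $\mathfrak g=\mathbb Cf\oplus\mathfrak g_{-1/2}\oplus\mathfrak g_0\oplus\mathfrak g_{1/2}\oplus\mathbb Ce$, and suppose the $\mathfrak g_0$-module $\mathfrak g_{1/2}$ is irreducible. If $\phi,\phi'$ are almost compact involutions of $\mathfrak g$ with $\phi|_{\mathfrak g_0}=\phi'|_{\mathfrak g_0}$, then either $\phi'=\phi$ or $\phi'(a)=(-1)^{2j}\phi(a)$ for all $a\in\mathfrak g_j$, $j\in\{0,\pm\frac12,\pm1\}$. (That is, an almost compact involution is determined up to a sign by its action on $\mathfrak g_0$.)
   Context: $\mathfrak g_j$ denotes the $j$-eigenspace of $\mathrm{ad}\,x$; $[x,e]=e$, $[x,f]=-f$, $[e,f]=x$; $\mathfrak g_{\pm1/2}$ odd, $\mathfrak g_0$ even. $\mathfrak g^\natural$ is the centralizer of $\{e,x,f\}$ in $\mathfrak g_{\bar0}$. An almost compact involution is a conjugate-linear involutive automorphism of $\mathfrak g$ fixing $e,x,f$ whose restriction to $\mathfrak g^\natural$ is compact. *)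

theory Defs
  imports Complex_Main
begin

text \<open>A complex Lie superalgebra is modelled on a type 'a with a complex scalar
multiplication sc, a bracket br, and parity subspaces V False (even) and V True (odd).\<close>

definition super_sign :: "bool \<Rightarrow> bool \<Rightarrow> complex" where
  "super_sign p q = (if p \<and> q then -1 else 1)"

definition lie_superalgebra ::
  "(complex \<Rightarrow> 'a::ab_group_add \<Rightarrow> 'a) \<Rightarrow> ('a \<Rightarrow> 'a \<Rightarrow> 'a) \<Rightarrow> (bool \<Rightarrow> 'a set) \<Rightarrow> bool" where
  "lie_superalgebra sc br V \<longleftrightarrow>
     vector_space sc \<and>
     (\<forall>p. module.subspace sc (V p)) \<and>
     V False \<inter> V True = {0} \<and>
     (\<forall>a. \<exists>a0 a1. a0 \<in> V False \<and> a1 \<in> V True \<and> a = a0 + a1) \<and>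
     (\<forall>a b c. br (a + b) c = br a c + br b c) \<and>
     (\<forall>a b c. br a (b + c) = br a b + br a c) \<and>
     (\<forall>k a b. br (sc k a) b = sc k (br a b)) \<and>
     (\<forall>k a b. br a (sc k b) = sc k (br a b)) \<and>
     (\<forall>p q a b. a \<in> V p \<longrightarrow> b \<in> V q \<longrightarrow> br a b \<in> V (p \<noteq> q)) \<and>
     (\<forall>p q a b. a \<in> V p \<longrightarrow> b \<in> V q \<longrightarrow> br a b = - sc (super_sign p q) (br b a)) \<and>
     (\<forall>p q a b c. a \<in> V p \<longrightarrow> b \<in> V q \<longrightarrow>
        br a (br b c) = br (br a b) c + sc (super_sign p q) (br b (br a c)))"

definition finite_dim :: "(complex \<Rightarrow> 'a::ab_group_add \<Rightarrow> 'a) \<Rightarrow> bool" where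
  "finite_dim sc \<longleftrightarrow> (\<exists>B. finite B \<and> module.span sc B = UNIV)"

definition graded_ideal ::
  "(complex \<Rightarrow> 'a::ab_group_add \<Rightarrow> 'a) \<Rightarrow> ('a \<Rightarrow> 'a \<Rightarrow> 'a) \<Rightarrow> (bool \<Rightarrow> 'a set) \<Rightarrow> 'a set \<Rightarrow> bool" where
  "graded_ideal sc br V I \<longleftrightarrow>
     module.subspace sc I \<and>
     (\<forall>a\<in>I. \<exists>a0 a1. a0 \<in> I \<inter> V False \<and> a1 \<in> I \<inter> V True \<and> a = a0 + a1) \<and>
     (\<forall>a b. b \<in> I \<longrightarrow> br a b \<in> I)"

definition simple_lie_superalgebra ::
  "(complex \<Rightarrow> 'a::ab_group_add \<Rightarrow> 'a) \<Rightarrow> ('a \<Rightarrow> 'a \<Rightarrow> 'a) \<Rightarrow> (bool \<Rightarrow> 'a set) \<Rightarrow> bool" where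
  "simple_lie_superalgebra sc br V \<longleftrightarrow>
     lie_superalgebra sc br V \<and> (\<exists>a b. br a b \<noteq> 0) \<and>
     (\<forall>I. graded_ideal sc br V I \<longrightarrow> I = {0} \<or> I = UNIV)"

definition even_part_reductive ::
  "(complex \<Rightarrow> 'a::ab_group_add \<Rightarrow> 'a) \<Rightarrow> ('a \<Rightarrow> 'a \<Rightarrow> 'a) \<Rightarrow> (bool \<Rightarrow> 'a set) \<Rightarrow> bool" where
  "even_part_reductive sc br V \<longleftrightarrow>
     (\<forall>W. module.subspace sc W \<and> W \<subseteq> V False \<and> (\<forall>a\<in>V False. \<forall>w\<in>W. br a w \<in> W) \<longrightarrow>
        (\<exists>W'. module.subspace sc W' \<and> W' \<subseteq> V False \<and> (\<forall>a\<in>V False. \<forall>w\<in>W'. br a w \<in> W') \<and>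
              W \<inter> W' = {0} \<and> (\<forall>v\<in>V False. \<exists>w w'. w \<in> W \<and> w' \<in> W' \<and> v = w + w')))"

definition has_invariant_form ::
  "(complex \<Rightarrow> 'a::ab_group_add \<Rightarrow> 'a) \<Rightarrow> ('a \<Rightarrow> 'a \<Rightarrow> 'a) \<Rightarrow> (bool \<Rightarrow> 'a set) \<Rightarrow> bool" where
  "has_invariant_form sc br V \<longleftrightarrow>
     (\<exists>B :: 'a \<Rightarrow> 'a \<Rightarrow> complex.
        (\<forall>a b c. B (a + b) c = B a c + B b c) \<and>
        (\<forall>a b c. B a (b + c) = B a b + B a c) \<and>
        (\<forall>k a b. B (sc k a) b = k * B a b) \<and>
        (\<forall>k a b. B a (sc k b) = k * B a b) \<and>
        (\<forall>a b. a \<in> V False \<longrightarrow> b \<in> V True \<longrightarrow> B a b = 0 \<and> B b a = 0) \<and>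
        (\<forall>p q a b. a \<in> V p \<longrightarrow> b \<in> V q \<longrightarrow> B a b = super_sign p q * B b a) \<and>
        (\<forall>a b c. B (br a b) c = B a (br b c)) \<and>
        (\<forall>a. (\<forall>b. B a b = 0) \<longrightarrow> a = 0))"

definition basic_simple_lie_superalgebra ::
  "(complex \<Rightarrow> 'a::ab_group_add \<Rightarrow> 'a) \<Rightarrow> ('a \<Rightarrow> 'a \<Rightarrow> 'a) \<Rightarrow> (bool \<Rightarrow> 'a set) \<Rightarrow> bool" where
  "basic_simple_lie_superalgebra sc br V \<longleftrightarrow>
     finite_dim sc \<and> simple_lie_superalgebra sc br V \<and>
     even_part_reductive sc br V \<and> has_invariant_form sc br V"

definition ad_eig ::
  "(complex \<Rightarrow> 'a \<Rightarrow> 'a) \<Rightarrow> ('a \<Rightarrow> 'a \<Rightarrow> 'a) \<Rightarrow> 'a \<Rightarrow> real \<Rightarrow> 'a set" where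
  "ad_eig sc br x j = {a. br x a = sc (of_real j) a}"

definition minimal_sl2_triple ::
  "(complex \<Rightarrow> 'a::ab_group_add \<Rightarrow> 'a) \<Rightarrow> ('a \<Rightarrow> 'a \<Rightarrow> 'a) \<Rightarrow> (bool \<Rightarrow> 'a set) \<Rightarrow> 'a \<Rightarrow> 'a \<Rightarrow> 'a \<Rightarrow> bool" where
  "minimal_sl2_triple sc br V e x f \<longleftrightarrow>
     e \<in> V False \<and> x \<in> V False \<and> f \<in> V False \<and>
     br x e = e \<and> br x f = - f \<and> br e f = x \<and>
     (\<forall>a. \<exists>a1 a2 a3 a4 a5.
        a1 \<in> ad_eig sc br x (-1) \<and> a2 \<in> ad_eig sc br x (-1/2) \<and> a3 \<in> ad_eig sc br x 0 \<and>
        a4 \<in> ad_eig sc br x (1/2) \<and> a5 \<in> ad_eig sc br x 1 \<and> a = a1 + a2 + a3 + a4 + a5) \<and>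
     ad_eig sc br x 1 = range (\<lambda>c. sc c e) \<and>
     ad_eig sc br x (-1) = range (\<lambda>c. sc c f) \<and>
     ad_eig sc br x 0 \<subseteq> V False \<and>
     ad_eig sc br x (1/2) \<subseteq> V True \<and> ad_eig sc br x (-1/2) \<subseteq> V True"

definition half_irreducible ::
  "(complex \<Rightarrow> 'a::ab_group_add \<Rightarrow> 'a) \<Rightarrow> ('a \<Rightarrow> 'a \<Rightarrow> 'a) \<Rightarrow> 'a \<Rightarrow> bool" where
  "half_irreducible sc br x \<longleftrightarrow>
     ad_eig sc br x (1/2) \<noteq> {0} \<and>
     (\<forall>W. module.subspace sc W \<and> W \<subseteq> ad_eig sc br x (1/2) \<and>
          (\<forall>a\<in>ad_eig sc br x 0. \<forall>w\<in>W. br a w \<in> W) \<longrightarrow>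
          W = {0} \<or> W = ad_eig sc br x (1/2))"

definition g_natural ::
  "('a \<Rightarrow> 'a \<Rightarrow> 'a::zero) \<Rightarrow> (bool \<Rightarrow> 'a set) \<Rightarrow> 'a \<Rightarrow> 'a \<Rightarrow> 'a \<Rightarrow> 'a set" where
  "g_natural br V e x f = {a \<in> V False. br a e = 0 \<and> br a x = 0 \<and> br a f = 0}"

definition conj_linear_involution ::
  "(complex \<Rightarrow> 'a::ab_group_add \<Rightarrow> 'a) \<Rightarrow> ('a \<Rightarrow> 'a \<Rightarrow> 'a) \<Rightarrow> (bool \<Rightarrow> 'a set) \<Rightarrow> ('a \<Rightarrow> 'a) \<Rightarrow> bool" where
  "conj_linear_involution sc br V \<phi> \<longleftrightarrow>
     (\<forall>a b. \<phi> (a + b) = \<phi> a + \<phi> b) \<and>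
     (\<forall>k a. \<phi> (sc k a) = sc (cnj k) (\<phi> a)) \<and>
     (\<forall>a b. \<phi> (br a b) = br (\<phi> a) (\<phi> b)) \<and>
     (\<forall>p. \<phi> ` V p \<subseteq> V p) \<and>
     (\<forall>a. \<phi> (\<phi> a) = a)"

text \<open>The restriction of phi to K is compact: its fixed-point real form
  is a compact Lie algebra (admits a positive definite ad-invariant inner product).\<close>
definition compact_on ::
  "(complex \<Rightarrow> 'a::ab_group_add \<Rightarrow> 'a) \<Rightarrow> ('a \<Rightarrow> 'a \<Rightarrow> 'a) \<Rightarrow> ('a \<Rightarrow> 'a) \<Rightarrow> 'a set \<Rightarrow> bool" where
  "compact_on sc br \<phi> K \<longleftrightarrow>
     (\<exists>P :: 'a \<Rightarrow> 'a \<Rightarrow> real.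
        let R = {a \<in> K. \<phi> a = a} in
        (\<forall>a\<in>R. \<forall>b\<in>R. P a b = P b a) \<and>
        (\<forall>a\<in>R. \<forall>b\<in>R. \<forall>c\<in>R. P (a + b) c = P a c + P b c) \<and>
        (\<forall>r::real. \<forall>a\<in>R. \<forall>b\<in>R. P (sc (of_real r) a) b = r * P a b) \<and>
        (\<forall>a\<in>R. a \<noteq> 0 \<longrightarrow> P a a > 0) \<and>
        (\<forall>a\<in>R. \<forall>b\<in>R. \<forall>c\<in>R. P (br a b) c + P b (br a c) = 0))"

definition almost_compact_involution ::
  "(complex \<Rightarrow> 'a::ab_group_add \<Rightarrow> 'a) \<Rightarrow> ('a \<Rightarrow> 'a \<Rightarrow> 'a) \<Rightarrow> (bool \<Rightarrow> 'a set) \<Rightarrow> 'a \<Rightarrow> 'a \<Rightarrow> 'a \<Rightarrow> ('a \<Rightarrow> 'a) \<Rightarrow> bool" where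
  "almost_compact_involution sc br V e x f \<phi> \<longleftrightarrow>
     conj_linear_involution sc br V \<phi> \<and> \<phi> e = e \<and> \<phi> x = x \<and> \<phi> f = f \<and>
     compact_on sc br \<phi> (g_natural br V e x f)"

end

theory Submission
  imports Defs "HOL-Computational_Algebra.Fundamental_Theorem_Algebra"
begin

primrec evL :: "complex list \<Rightarrow> complex \<Rightarrow> complex" where
  "evL [] z = 0"
| "evL (c # cs) z = c + z * evL cs z"

lemma evL_poly: "evL cs z = poly (Poly cs) z"
  by (induction cs) auto

locale eigsetup = vector_space sc for sc :: "complex \<Rightarrow> 'a::ab_group_add \<Rightarrow> 'a" +
  fixes \<psi> :: "'a \<Rightarrow> 'a" and U :: "'a set" and BB :: "'a set"
  assumes psi_add: "\<psi> (a + b) = \<psi> a + \<psi> b"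
    and psi_sc: "\<psi> (sc k a) = sc k (\<psi> a)"
    and U: "subspace U" and psiU: "a \<in> U \<Longrightarrow> \<psi> a \<in> U"
    and finB: "finite BB" and spanB: "span BB = UNIV"
begin

lemma psi0[simp]: "\<psi> 0 = 0"
  using psi_add[of 0 0] by simp

lemma psi_diff: "\<psi> (a - b) = \<psi> a - \<psi> b"
proof -
  have "\<psi> (a - b) + \<psi> b = \<psi> a" using psi_add[of "a - b" b] by simp
  then show ?thesis by (simp add: eq_diff_eq)
qed

lemma psi_sum: "\<psi> (sum g A) = (\<Sum>k\<in>A. \<psi> (g k))"
  by (induction A rule: infinite_finite_induct) (simp_all add: psi_add)

primrec actL :: "complex list \<Rightarrow> 'a \<Rightarrow> 'a" where
  "actL [] v = 0"
| "actL (c # cs) v = sc c v + \<psi> (actL cs v)"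

lemma actL_U: "v \<in> U \<Longrightarrow> actL cs v \<in> U"
  by (induction cs) (auto intro!: subspace_add subspace_scale U psiU subspace_0)

lemma actL_rep0: "actL (replicate n 0) v = 0"
  by (induction n) auto

lemma actL_sum: "actL cs v = (\<Sum>k<length cs. sc (cs!k) ((\<psi>^^k) v))"
proof (induction cs)
  case Nil then show ?case by simp
next
  case (Cons c cs)
  have "actL (c#cs) v = sc c v + (\<Sum>k<length cs. sc (cs!k) ((\<psi>^^Suc k) v))"
    by (simp add: Cons psi_sum psi_sc)
  also have "\<dots> = (\<Sum>k<length (c#cs). sc ((c#cs)!k) ((\<psi>^^k) v))"
    by (simp only: length_Cons sum.lessThan_Suc_shift) simp
  finally show ?case .
qed

lemma division:
  "\<exists>qs. length qs = length cs - 1 \<and>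
     (\<forall>v. actL cs v = \<psi> (actL qs v) - sc r (actL qs v) + sc (evL cs r) v) \<and>
     (\<forall>z. evL cs z = (z - r) * evL qs z + evL cs r)"
proof (induction cs)
  case Nil
  show ?case by (rule exI[of _ "[]"]) simp
next
  case (Cons c cs)
  show ?case
  proof (cases "cs = []")
    case True
    then show ?thesis by (intro exI[of _ "[]"]) simp
  next
    case False
    from Cons obtain qs' where l: "length qs' = length cs - 1"
      and a: "\<forall>v. actL cs v = \<psi> (actL qs' v) - sc r (actL qs' v) + sc (evL cs r) v"
      and p: "\<forall>z. evL cs z = (z - r) * evL qs' z + evL cs r" by blast
    show ?thesis
    proof (intro exI[of _ "evL cs r # qs'"] conjI allI)
      show "length (evL cs r # qs') = length (c # cs) - 1" using l False by (cases cs) auto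
    next
      fix v
      have "\<psi> (actL cs v) = \<psi> (\<psi> (actL qs' v)) - sc r (\<psi> (actL qs' v)) + sc (evL cs r) (\<psi> v)"
        using a[rule_format, of v] by (simp add: psi_add psi_diff psi_sc)
      then show "actL (c # cs) v = \<psi> (actL (evL cs r # qs') v) - sc r (actL (evL cs r # qs') v) + sc (evL (c # cs) r) v"
      proof -
        have "sc (evL (c # cs) r) v = sc c v + sc (r * evL cs r) v"
          by (simp add: scale_left_distrib)
        moreover have "sc r (actL (evL cs r # qs') v) = sc (r * evL cs r) v + sc r (\<psi> (actL qs' v))"
          by (simp add: scale_right_distrib)
        moreover have "\<psi> (actL (evL cs r # qs') v) = sc (evL cs r) (\<psi> v) + \<psi> (\<psi> (actL qs' v))"
          by (simp add: psi_add psi_sc)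
        ultimately show ?thesis using \<open>\<psi> (actL cs v) = _\<close> by simp
      qed
    next
      fix z
      show "evL (c # cs) z = (z - r) * evL (evL cs r # qs') z + evL (c # cs) r"
      proof -
        have "evL (c#cs) z = c + z * ((z - r) * evL qs' z + evL cs r)"
          using p[rule_format, of z] by (simp only: evL.simps)
        then show ?thesis by (simp add: algebra_simps)
      qed
    qed
  qed
qed


lemma eig_from_poly:
  "length cs = n \<Longrightarrow> v \<in> U \<Longrightarrow> v \<noteq> 0 \<Longrightarrow> actL cs v = 0 \<Longrightarrow> Poly cs \<noteq> 0 \<Longrightarrow>
    \<exists>w l. w \<in> U \<and> w \<noteq> 0 \<and> \<psi> w = sc l w"
proof (induction n arbitrary: cs rule: less_induct)
  case (less n)
  show ?case
  proof (cases "\<exists>r. evL cs r = 0")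
    case True
    then obtain r where r: "evL cs r = 0" by blast
    obtain qs where l: "length qs = length cs - 1"
      and a: "\<forall>v. actL cs v = \<psi> (actL qs v) - sc r (actL qs v) + sc (evL cs r) v"
      and p: "\<forall>z. evL cs z = (z - r) * evL qs z + evL cs r"
      using division by blast
    define w where "w = actL qs v"
    have wU: "w \<in> U" using actL_U less by (simp add: w_def)
    have ew: "\<psi> w = sc r w" using a[rule_format, of v] r less(5) by (simp add: w_def)
    show ?thesis
    proof (cases "w = 0")
      case False then show ?thesis using wU ew by blast
    next
      case True
      have "Poly qs \<noteq> 0"
      proof
        assume "Poly qs = 0"
        then have "\<forall>z. evL cs z = 0" using p r by (simp add: evL_poly)
        then have "poly (Poly cs) = poly 0" by (auto simp: evL_poly)
        then show False using less(6) by (simp add: poly_eq_poly_eq_iff)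
      qed
      moreover have "cs \<noteq> []" using less(6) by auto
      ultimately show ?thesis using less(1)[of "length qs" qs] l less(2,3,4) True
        by (auto simp: w_def)
    qed
  next
    case False
    then have "constant (poly (Poly cs))" using fundamental_theorem_of_algebra
      by (auto simp: evL_poly)
    then have "degree (Poly cs) = 0" by (simp add: constant_degree)
    then have pc: "Poly cs = [:coeff (Poly cs) 0:]" by (metis degree_0_id)
    define k where "k = coeff (Poly cs) 0"
    have k0: "k \<noteq> 0" using pc less(6) unfolding k_def by (metis pCons_0_0)
    have ev: "evL cs z = k" for z
      by (subst evL_poly, subst pc) (simp add: k_def)
    obtain qs where a: "\<forall>v. actL cs v = \<psi> (actL qs v) - sc 0 (actL qs v) + sc (evL cs 0) v"
      and p: "\<forall>z. evL cs z = (z - 0) * evL qs z + evL cs 0"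
      using division[of cs 0] by blast
    have z: "z \<noteq> 0 \<Longrightarrow> poly (Poly qs) z = 0" for z
      using p[rule_format, of z] ev by (simp add: evL_poly)
    have "Poly qs = 0"
    proof (rule ccontr)
      assume "Poly qs \<noteq> 0"
      then have "finite {z. poly (Poly qs) z = 0}" by (rule poly_roots_finite)
      then have "finite (insert 0 {z. poly (Poly qs) z = 0})" by simp
      moreover have "insert 0 {z. poly (Poly qs) z = 0} = (UNIV :: complex set)" using z by auto
      ultimately show False using infinite_UNIV_char_0 by metis
    qed
    then obtain m where "qs = replicate m 0" using Poly_eq_0 by blast
    then have "actL cs v = sc k v" using a ev by (simp add: actL_rep0)
    then show ?thesis using less k0 by simp
  qed
qed

lemma exists_poly: "\<exists>cs. Poly cs \<noteq> 0 \<and> actL cs v = 0"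
proof -
  define n where "n = card BB"
  define F where "F k = (\<psi>^^k) v" for k
  have "\<exists>g. (\<exists>k\<le>n. g k \<noteq> 0) \<and> (\<Sum>k\<le>n. sc (g k) (F k)) = 0"
  proof (cases "inj_on F {..n}")
    case True
    define S where "S = F ` {..n}"
    have cS: "card S = Suc n" using True by (simp add: S_def card_image)
    have "dependent S"
    proof (rule ccontr)
      assume "\<not> dependent S"
      then have "card S \<le> card BB" using independent_span_bound[OF finB] spanB by auto
      then show False using cS n_def by simp
    qed
    then obtain t u where t: "finite t" "t \<subseteq> S" "(\<Sum>w\<in>t. sc (u w) w) = 0" "\<exists>w\<in>t. u w \<noteq> 0"
      unfolding dependent_explicit by blast
    define g where "g k = (if F k \<in> t then u (F k) else 0)" for k
    have "(\<Sum>k\<le>n. sc (g k) (F k)) = (\<Sum>w\<in>S. if w \<in> t then sc (u w) w else 0)"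
    proof -
      have "(\<Sum>w\<in>S. if w \<in> t then sc (u w) w else 0) = (\<Sum>k\<le>n. if F k \<in> t then sc (u (F k)) (F k) else 0)"
        using True by (simp add: S_def sum.reindex)
      moreover have "(\<Sum>k\<le>n. sc (g k) (F k)) = (\<Sum>k\<le>n. if F k \<in> t then sc (u (F k)) (F k) else 0)"
        by (intro sum.cong) (auto simp: g_def)
      ultimately show ?thesis by simp
    qed
    also have "\<dots> = (\<Sum>w\<in>S \<inter> t. sc (u w) w)"
      by (simp add: sum.inter_restrict S_def)
    also have "S \<inter> t = t" using t by auto
    finally have s0: "(\<Sum>k\<le>n. sc (g k) (F k)) = 0" using t by simp
    from t obtain w where w: "w \<in> t" "u w \<noteq> 0" by blast
    then obtain k where "k \<le> n" "w = F k" using t S_def by auto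
    then have "g k \<noteq> 0" using w by (simp add: g_def)
    then show ?thesis using s0 \<open>k \<le> n\<close> by blast
  next
    case False
    then obtain i j where ij: "i \<le> n" "j \<le> n" "i \<noteq> j" "F i = F j" unfolding inj_on_def by auto
    define g :: "nat \<Rightarrow> complex" where "g k = (if k = i then 1 else if k = j then -1 else 0)" for k
    have e: "sc (g k) (F k) = (if k = i then F i else 0) + (if k = j then - F j else 0)" for k
      using ij by (auto simp: g_def scale_minus_left)
    have "(\<Sum>k\<le>n. sc (g k) (F k)) = F i - F j"
      unfolding e sum.distrib using ij by simp
    then show ?thesis using ij by (intro exI[of _ g]) (auto simp: g_def)
  qed
  then obtain g where g: "\<exists>k\<le>n. g k \<noteq> 0" "(\<Sum>k\<le>n. sc (g k) (F k)) = 0" by blast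
  define cs where "cs = map g [0..<Suc n]"
  have "actL cs v = (\<Sum>k<Suc n. sc (g k) (F k))"
    unfolding actL_sum cs_def F_def by (intro sum.cong) (auto simp del: upt_Suc)
  also have "\<dots> = 0" using g by (simp add: lessThan_Suc_atMost)
  finally have a0: "actL cs v = 0" .
  have "Poly cs \<noteq> 0"
  proof
    assume "Poly cs = 0"
    then obtain m where m: "cs = replicate m 0" using Poly_eq_0 by blast
    from g obtain k where k: "k \<le> n" "g k \<noteq> 0" by blast
    have "cs ! k = g k" using k by (simp add: cs_def nth_map_upt del: upt_Suc)
    moreover have "k < length cs" using k by (simp add: cs_def)
    ultimately show False using m k by simp
  qed
  then show ?thesis using a0 by blast
qed

lemma eigenvector: "U \<noteq> {0} \<Longrightarrow> \<exists>w l. w \<in> U \<and> w \<noteq> 0 \<and> \<psi> w = sc l w"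
proof -
  assume "U \<noteq> {0}"
  then obtain v where "v \<in> U" "v \<noteq> 0" using subspace_0[OF U] by blast
  moreover obtain cs where "Poly cs \<noteq> 0" "actL cs v = 0" using exists_poly by blast
  ultimately show ?thesis using eig_from_poly by blast
qed

end


locale LS = vector_space sc for sc :: "complex \<Rightarrow> 'a::ab_group_add \<Rightarrow> 'a" +
  fixes br :: "'a \<Rightarrow> 'a \<Rightarrow> 'a" and V :: "bool \<Rightarrow> 'a set" and e x f :: 'a
  assumes addL: "br (a + b) c = br a c + br b c"
    and addR: "br a (b + c) = br a b + br a c"
    and scL: "br (sc k a) b = sc k (br a b)"
    and scR: "br a (sc k b) = sc k (br a b)"
    and par: "a \<in> V p \<Longrightarrow> b \<in> V q \<Longrightarrow> br a b \<in> V (p \<noteq> q)"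
    and anti: "a \<in> V p \<Longrightarrow> b \<in> V q \<Longrightarrow> br a b = - sc (super_sign p q) (br b a)"
    and jac: "a \<in> V p \<Longrightarrow> b \<in> V q \<Longrightarrow>
        br a (br b c) = br (br a b) c + sc (super_sign p q) (br b (br a c))"
    and subV: "subspace (V p)"
    and eV: "e \<in> V False" and xV: "x \<in> V False" and fV: "f \<in> V False"
    and xe: "br x e = e" and xf: "br x f = - f" and ef: "br e f = x"
    and decomp: "\<forall>a. \<exists>a1 a2 a3 a4 a5.
        a1 \<in> ad_eig sc br x (-1) \<and> a2 \<in> ad_eig sc br x (-1/2) \<and> a3 \<in> ad_eig sc br x 0 \<and>
        a4 \<in> ad_eig sc br x (1/2) \<and> a5 \<in> ad_eig sc br x 1 \<and> a = a1 + a2 + a3 + a4 + a5"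
    and g1: "ad_eig sc br x 1 = range (\<lambda>c. sc c e)"
    and gm1: "ad_eig sc br x (-1) = range (\<lambda>c. sc c f)"
    and g0V: "ad_eig sc br x 0 \<subseteq> V False"
    and ghV: "ad_eig sc br x (1/2) \<subseteq> V True"
    and gmhV: "ad_eig sc br x (-1/2) \<subseteq> V True"
begin

abbreviation G where "G j \<equiv> ad_eig sc br x j"

lemma G_iff: "a \<in> G j \<longleftrightarrow> br x a = sc (complex_of_real j) a"
  by (simp add: ad_eig_def)

lemma br0L[simp]: "br 0 b = 0" using addL[of 0 0 b] by simp
lemma br0R[simp]: "br a 0 = 0" using addR[of a 0 0] by simp
lemma brnegL: "br (- a) b = - br a b"
proof -
  have "br (- a) b + br a b = 0" using addL[of "- a" a b] by simp
  then show ?thesis by (simp add: eq_neg_iff_add_eq_0)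
qed
lemma brnegR: "br a (- b) = - br a b"
proof -
  have "br a (- b) + br a b = 0" using addR[of a "- b" b] by simp
  then show ?thesis by (simp add: eq_neg_iff_add_eq_0)
qed
lemma brdiffL: "br (a - b) c = br a c - br b c"
  by (simp only: diff_conv_add_uminus addL brnegL)
lemma brdiffR: "br a (b - c) = br a b - br a c"
  by (simp only: diff_conv_add_uminus addR brnegR)

lemma ss_False[simp]: "super_sign False q = 1" and ss_False2[simp]: "super_sign p False = 1"
  and ss_TT[simp]: "super_sign True True = -1"
  by (auto simp: super_sign_def)

lemma G_sub: "subspace (G j)"
  unfolding subspace_def
proof (intro conjI ballI allI)
  show "0 \<in> G j" by (simp add: G_iff)
next
  fix a b assume "a \<in> G j" "b \<in> G j"
  then show "a + b \<in> G j" by (simp add: G_iff addR scale_right_distrib)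
next
  fix c a assume "a \<in> G j"
  then have "br x (sc c a) = sc (complex_of_real j) (sc c a)"
    by (simp add: G_iff scR mult.commute)
  then show "sc c a \<in> G j" by (simp add: G_iff)
qed

lemma sum_eig:
  assumes "\<forall>p\<in>set zs. br x (snd p) = sc (fst p) (snd p)"
  shows "br x (sum_list (map snd zs)) - sc l (sum_list (map snd zs)) =
         sum_list (map (\<lambda>p. sc (fst p - l) (snd p)) zs)"
  using assms
proof (induction zs)
  case Nil then show ?case by simp
next
  case (Cons p zs)
  obtain l' z where p: "p = (l', z)" by force
  let ?S = "sum_list (map snd zs)"
  have "br x (z + ?S) - sc l (z + ?S) = (br x z - sc l z) + (br x ?S - sc l ?S)"
    by (simp only: addR scale_right_distrib add_diff_add)
  moreover have "br x z - sc l z = sc (l' - l) z"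
    using Cons.prems p by (simp add: scale_left_diff_distrib)
  moreover have "br x ?S - sc l ?S = sum_list (map (\<lambda>p. sc (fst p - l) (snd p)) zs)"
    using Cons.IH Cons.prems by simp
  ultimately show ?case using p by (simp only: list.map sum_list.Cons snd_conv fst_conv)
qed

lemma eig_indep_n:
  "length zs = n \<Longrightarrow> \<forall>p\<in>set zs. br x (snd p) = sc (fst p) (snd p) \<and> fst p \<noteq> \<mu> \<Longrightarrow> br x w = sc \<mu> w \<Longrightarrow>
    w = sum_list (map snd zs) \<Longrightarrow> w = 0"
proof (induction n arbitrary: zs w)
  case 0 then show ?case by simp
next
  case (Suc n)
  then obtain l z zs0 where zs: "zs = (l, z) # zs0" and len: "length zs0 = n"
    by (cases zs) auto
  have zl: "br x z = sc l z" "l \<noteq> \<mu>" using Suc.prems zs by auto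
  define zs' where "zs' = map (\<lambda>q. (fst q, sc (fst q - l) (snd q))) zs0"
  have "br x w - sc l w = sc (\<mu> - l) w" using Suc.prems by (simp add: scale_left_diff_distrib)
  moreover have "br x w - sc l w = sum_list (map (\<lambda>q. sc (fst q - l) (snd q)) zs0)"
  proof -
    have "br x w - sc l w = (br x z - sc l z) + (br x (sum_list (map snd zs0)) - sc l (sum_list (map snd zs0)))"
    proof -
      have wd: "w = z + sum_list (map snd zs0)" using Suc.prems(4) zs by simp
      show ?thesis by (simp only: wd addR scale_right_distrib add_diff_add)
    qed
    also have "\<dots> = sum_list (map (\<lambda>q. sc (fst q - l) (snd q)) zs0)"
      using zl sum_eig[of zs0 l] Suc.prems zs by simp
    finally show ?thesis .
  qed
  ultimately have s: "sc (\<mu> - l) w = sum_list (map snd zs')" by (simp add: zs'_def o_def)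
  have h1: "\<forall>q\<in>set zs'. br x (snd q) = sc (fst q) (snd q) \<and> fst q \<noteq> \<mu>"
    using Suc.prems zs by (auto simp: zs'_def scR scale_left_commute)
  have h2: "br x (sc (\<mu> - l) w) = sc \<mu> (sc (\<mu> - l) w)"
    using Suc.prems by (simp add: scR scale_left_commute)
  have "sc (\<mu> - l) w = 0"
    by (rule Suc.IH[OF _ h1 h2 s]) (simp add: zs'_def len)
  then show ?case using zl by simp
qed

lemma eig_indep:
  "\<forall>p\<in>set zs. br x (snd p) = sc (fst p) (snd p) \<and> fst p \<noteq> \<mu> \<Longrightarrow> br x w = sc \<mu> w \<Longrightarrow>
    w = sum_list (map snd zs) \<Longrightarrow> w = 0"
  using eig_indep_n by blast

lemma G_zero:
  assumes a: "a \<in> G j" and j: "j \<noteq> -1" "j \<noteq> -1/2" "j \<noteq> 0" "j \<noteq> 1/2" "j \<noteq> 1"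
  shows "a = 0"
proof -
  obtain a1 a2 a3 a4 a5 where d: "a1 \<in> G (-1)" "a2 \<in> G (-1/2)" "a3 \<in> G 0" "a4 \<in> G (1/2)" "a5 \<in> G 1"
    "a = a1 + a2 + a3 + a4 + a5" using decomp by blast
  let ?zs = "[(complex_of_real (-1), a1), (complex_of_real (-1/2), a2), (complex_of_real 0, a3),
              (complex_of_real (1/2), a4), (complex_of_real 1, a5)]"
  have e1: "br x a1 = sc (complex_of_real (-1)) a1" using d(1) G_iff by blast
  have e2: "br x a2 = sc (complex_of_real (-1/2)) a2" using d(2) G_iff by blast
  have e3: "br x a3 = sc (complex_of_real 0) a3" using d(3) G_iff by blast
  have e4: "br x a4 = sc (complex_of_real (1/2)) a4" using d(4) G_iff by blast
  have e5: "br x a5 = sc (complex_of_real 1) a5" using d(5) G_iff by blast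
  have n: "complex_of_real r \<noteq> complex_of_real j" if "r \<noteq> j" for r
    using that of_real_eq_iff by metis
  have "\<forall>p\<in>set ?zs. br x (snd p) = sc (fst p) (snd p) \<and> fst p \<noteq> complex_of_real j"
    using e1 e2 e3 e4 e5 n[of "-1"] n[of "-1/2"] n[of 0] n[of "1/2"] n[of 1] j
    by (simp only: list.set ball_simps fst_conv snd_conv; blast)
  moreover have "br x a = sc (complex_of_real j) a" using a G_iff by blast
  moreover have "a = sum_list (map snd ?zs)" using d by (simp add: add.assoc)
  ultimately show ?thesis by (rule eig_indep)
qed

lemma brG: "a \<in> V p \<Longrightarrow> a \<in> G i \<Longrightarrow> b \<in> G j \<Longrightarrow> br a b \<in> G (i + j)"
proof -
  assume a: "a \<in> V p" "a \<in> G i" and b: "b \<in> G j"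
  have "br x (br a b) = br (br x a) b + br a (br x b)" using jac[OF xV a(1)] by simp
  also have "\<dots> = sc (complex_of_real i) (br a b) + sc (complex_of_real j) (br a b)"
    using a(2) b G_iff by (simp add: scL scR)
  also have "\<dots> = sc (complex_of_real (i + j)) (br a b)" by (simp add: scale_left_distrib)
  finally show ?thesis using G_iff by blast
qed

lemma brG': "a \<in> V p \<Longrightarrow> a \<in> G i \<Longrightarrow> b \<in> G j \<Longrightarrow> k = i + j \<Longrightarrow> br a b \<in> G k"
  using brG by blast

lemma eG1: "e \<in> G 1" using xe G_iff by simp
lemma fGm1: "f \<in> G (-1)" using xf G_iff by (simp add: scale_minus_left)

lemma fe: assumes y: "y \<in> G (-1/2)" shows "br f (br e y) = sc (1/2) y"
proof -
  have "br f (br e y) = br (br f e) y + br e (br f y)"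
    using jac[OF fV eV] by simp
  moreover have "br f e = - x" using anti[OF fV eV] ef by simp
  moreover have "br f y = 0"
    by (rule G_zero[OF brG'[OF fV fGm1 y refl]]) auto
  moreover have "br x y = sc (-1/2) y" using y G_iff by simp
  moreover have "sc (- 1 / 2) y = - sc (1/2) y" using scale_minus_left[of "1/2" y] by simp
  ultimately show ?thesis by (simp add: brnegL)
qed

lemma eGh: "y \<in> G (-1/2) \<Longrightarrow> br e y \<in> G (1/2)"
  by (rule brG'[OF eV eG1]) auto

lemma exists_bracket:
  fixes Bf :: "'a \<Rightarrow> 'a \<Rightarrow> complex"
  assumes Bl: "\<And>a b c. Bf (a + b) c = Bf a c + Bf b c"
    and Br: "\<And>a b c. Bf a (b + c) = Bf a b + Bf a c"
    and Bsl: "\<And>k a b. Bf (sc k a) b = k * Bf a b"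
    and Bsr: "\<And>k a b. Bf a (sc k b) = k * Bf a b"
    and Bsym: "\<And>p q a b. a \<in> V p \<Longrightarrow> b \<in> V q \<Longrightarrow> Bf a b = super_sign p q * Bf b a"
    and Binv: "\<And>a b c. Bf (br a b) c = Bf a (br b c)"
    and Bnd: "\<And>a. (\<forall>b. Bf a b = 0) \<Longrightarrow> a = 0"
    and ne: "G (1/2) \<noteq> {0}"
  shows "\<exists>c a. c \<in> G (1/2) \<and> a \<in> G (1/2) \<and> br c a \<noteq> 0"
proof -
  have B0: "Bf a 0 = 0" for a using Br[of a 0 0] by simp
  have Bz: "Bf 0 b = 0" for b using Bl[of 0 0 b] by simp
  have Bneg: "Bf (- a) b = - Bf a b" for a b
  proof -
    have "Bf (- a) b + Bf a b = 0" using Bl[of "-a" a b] Bz by simp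
    then show ?thesis by (simp add: eq_neg_iff_add_eq_0)
  qed
  obtain a where a: "a \<in> G (1/2)" "a \<noteq> 0" using ne subspace_0[OF G_sub] by blast
  have aV: "a \<in> V True" using a ghV by blast
  obtain y where y: "Bf a y \<noteq> 0" using Bnd a(2) by blast
  have ortho: "(complex_of_real j + 1/2) * Bf a b = 0" if b: "b \<in> G j" for b j
  proof -
    have "br a x = - sc (1/2) a" using anti[OF aV xV] a G_iff by simp
    then have "Bf (br a x) b = - (1/2) * Bf a b" by (simp add: Bneg Bsl)
    moreover have "Bf (br a x) b = complex_of_real j * Bf a b" using Binv b G_iff Bsr by simp
    ultimately show ?thesis by (simp add: algebra_simps)
  qed
  obtain y1 y2 y3 y4 y5 where d: "y1 \<in> G (-1)" "y2 \<in> G (-1/2)" "y3 \<in> G 0" "y4 \<in> G (1/2)" "y5 \<in> G 1"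
    "y = y1 + y2 + y3 + y4 + y5" using decomp by blast
  have "Bf a y1 = 0" using ortho[OF d(1)] by simp
  moreover have "Bf a y3 = 0" using ortho[OF d(3)] by simp
  moreover have "Bf a y4 = 0" using ortho[OF d(4)] by simp
  moreover have "Bf a y5 = 0" using ortho[OF d(5)] by simp
  ultimately have y2: "Bf a y2 \<noteq> 0" using y d(6) by (simp add: Br)
  define c where "c = br e y2"
  have cG: "c \<in> G (1/2)" using eGh d(2) c_def by simp
  have cV: "c \<in> V True" using cG ghV by blast
  have fc: "br f c = sc (1/2) y2" using fe d(2) c_def by simp
  have fcV: "br f c \<in> V True" using par[OF fV cV] by simp
  have "Bf a (br f c) = - Bf f (br c a)"
    using Bsym[OF aV fcV] Binv by simp
  moreover have "Bf a (br f c) \<noteq> 0" using fc y2 Bsr by simp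
  ultimately have "br c a \<noteq> 0" using B0 by auto
  then show ?thesis using cG a by blast
qed


lemma cl_G:
  assumes add: "\<And>a b. \<chi> (a + b) = \<chi> a + \<chi> b" and scc: "\<And>k a. \<chi> (sc k a) = sc (cnj k) (\<chi> a)"
    and hom: "\<And>a b. \<chi> (br a b) = br (\<chi> a) (\<chi> b)" and chx: "\<chi> x = x"
    and a: "a \<in> G j"
  shows "\<chi> a \<in> G j"
proof -
  have "br x (\<chi> a) = \<chi> (br x a)" using hom chx by simp
  also have "\<dots> = \<chi> (sc (complex_of_real j) a)" using a G_iff by simp
  also have "\<dots> = sc (complex_of_real j) (\<chi> a)" using scc by simp
  finally show ?thesis using G_iff by simp
qed

lemma final_neg:
  assumes ph: "\<And>a. a \<in> G (1/2) \<or> a \<in> G (-1/2) \<Longrightarrow> \<phi>' a = sc l (\<phi> a)"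
    and p1e: "\<And>a. a \<in> G 1 \<or> a \<in> G (-1) \<Longrightarrow> \<phi>' a = \<phi> a"
    and p0: "\<And>a. a \<in> G 0 \<Longrightarrow> \<phi>' a = \<phi> a"
    and l1: "l = -1"
  shows "\<forall>j \<in> {-1, -1/2, 0, 1/2, 1::real}. \<forall>a \<in> G j. \<phi>' a = sc ((-1) powi \<lfloor>2 * j\<rfloor>) (\<phi> a)"
proof -
  have pw: "(-1::complex) powi \<lfloor>2 * (-1/2::real)\<rfloor> = -1"
  proof -
    have "\<lfloor>2 * (-1/2::real)\<rfloor> = -1" by (simp add: floor_eq_iff)
    then show ?thesis by (simp add: power_int_minus)
  qed
  have pw2: "(-1::complex) powi \<lfloor>2 * (1/2::real)\<rfloor> = -1" by simp
  have pw3: "(-1::complex) powi \<lfloor>2 * (-1::real)\<rfloor> = 1" "(-1::complex) powi \<lfloor>2 * (0::real)\<rfloor> = 1"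
    "(-1::complex) powi \<lfloor>2 * (1::real)\<rfloor> = 1" by simp_all
  have "\<forall>j \<in> {-1, -1/2, 0, 1/2, 1::real}. \<forall>a \<in> G j. \<phi>' a = sc ((-1) powi \<lfloor>2 * j\<rfloor>) (\<phi> a)"
  proof (intro ballI)
    fix j a assume j: "j \<in> {-1, -1/2, 0, 1/2, 1::real}" and a: "a \<in> G j"
    from j have "j = -1 \<or> j = -1/2 \<or> j = 0 \<or> j = 1/2 \<or> j = 1" by simp
    then show "\<phi>' a = sc ((-1) powi \<lfloor>2 * j\<rfloor>) (\<phi> a)"
    proof (elim disjE)
      assume jj: "j = -1" show ?thesis using a p1e[of a] unfolding jj pw3(1) by simp
    next
      assume jj: "j = -1/2" show ?thesis using a ph[of a] l1 unfolding jj pw by simp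
    next
      assume jj: "j = 0" show ?thesis using a p0[of a] unfolding jj pw3(2) by simp
    next
      assume jj: "j = 1/2" show ?thesis using a ph[of a] l1 unfolding jj pw2 by simp
    next
      assume jj: "j = 1" show ?thesis using a p1e[of a] unfolding jj pw3(3) by simp
    qed
  qed
  then show ?thesis .
qed

lemma main:
  fixes Bf :: "'a \<Rightarrow> 'a \<Rightarrow> complex" and BB :: "'a set"
  assumes Bl: "\<And>a b c. Bf (a + b) c = Bf a c + Bf b c"
    and Br: "\<And>a b c. Bf a (b + c) = Bf a b + Bf a c"
    and Bsl: "\<And>k a b. Bf (sc k a) b = k * Bf a b"
    and Bsr: "\<And>k a b. Bf a (sc k b) = k * Bf a b"
    and Bsym: "\<And>p q a b. a \<in> V p \<Longrightarrow> b \<in> V q \<Longrightarrow> Bf a b = super_sign p q * Bf b a"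
    and Binv: "\<And>a b c. Bf (br a b) c = Bf a (br b c)"
    and Bnd: "\<And>a. (\<forall>b. Bf a b = 0) \<Longrightarrow> a = 0"
    and finB: "finite BB" and spanB: "span BB = UNIV"
    and irr: "half_irreducible sc br x"
    and p1: "\<And>a b. \<phi> (a + b) = \<phi> a + \<phi> b" "\<And>k a. \<phi> (sc k a) = sc (cnj k) (\<phi> a)"
      "\<And>a b. \<phi> (br a b) = br (\<phi> a) (\<phi> b)" "\<And>a. \<phi> (\<phi> a) = a"
      "\<phi> e = e" "\<phi> x = x" "\<phi> f = f"
    and p2: "\<And>a b. \<phi>' (a + b) = \<phi>' a + \<phi>' b" "\<And>k a. \<phi>' (sc k a) = sc (cnj k) (\<phi>' a)"
      "\<And>a b. \<phi>' (br a b) = br (\<phi>' a) (\<phi>' b)" "\<And>a. \<phi>' (\<phi>' a) = a"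
      "\<phi>' e = e" "\<phi>' x = x" "\<phi>' f = f"
    and agree: "\<forall>a \<in> G 0. \<phi> a = \<phi>' a"
  shows "\<phi>' = \<phi> \<or>
    (\<forall>j \<in> {-1, -1/2, 0, 1/2, 1::real}. \<forall>a \<in> G j.
        \<phi>' a = sc ((-1) powi \<lfloor>2 * j\<rfloor>) (\<phi> a))"
proof -
  define \<psi> where "\<psi> a = \<phi>' (\<phi> a)" for a
  have psi_add: "\<psi> (a + b) = \<psi> a + \<psi> b" for a b by (simp add: \<psi>_def p1 p2)
  have psi_sc: "\<psi> (sc k a) = sc k (\<psi> a)" for k a by (simp add: \<psi>_def p1 p2)
  have psi_br: "\<psi> (br a b) = br (\<psi> a) (\<psi> b)" for a b by (simp add: \<psi>_def p1 p2)
  have psi_G: "a \<in> G j \<Longrightarrow> \<psi> a \<in> G j" for a j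
    unfolding \<psi>_def by (rule cl_G[of \<phi>'], (simp add: p2)+, rule cl_G[of \<phi>], (simp add: p1)+)
  have psi_0: "a \<in> G 0 \<Longrightarrow> \<psi> a = a" for a
    using agree cl_G[of \<phi> a 0] p1 by (simp add: \<psi>_def) metis
  have psi_e: "\<psi> e = e" by (simp add: \<psi>_def p1 p2)
  have irr1: "G (1/2) \<noteq> {0}" using irr by (simp add: half_irreducible_def)
  have psi00: "\<psi> 0 = 0" using psi_add[of 0 0] by simp
  have ES: "eigsetup sc \<psi> (G (1/2)) BB"
  proof (rule eigsetup.intro[OF vector_space_axioms], rule eigsetup_axioms.intro)
    show "\<And>a b. \<psi> (a + b) = \<psi> a + \<psi> b" by (rule psi_add)
    show "\<And>k a. \<psi> (sc k a) = sc k (\<psi> a)" by (rule psi_sc)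
    show "subspace (G (1/2))" by (rule G_sub)
    show "\<And>a. a \<in> G (1/2) \<Longrightarrow> \<psi> a \<in> G (1/2)" by (rule psi_G)
    show "finite BB" by (rule finB)
    show "span BB = UNIV" by (rule spanB)
  qed
  obtain w l where w: "w \<in> G (1/2)" "w \<noteq> 0" "\<psi> w = sc l w"
    using eigsetup.eigenvector[OF ES irr1] by blast
  define W where "W = {a \<in> G (1/2). \<psi> a = sc l a}"
  have Wsub: "subspace W"
    unfolding subspace_def W_def
    using subspace_0[OF G_sub] subspace_add[OF G_sub] subspace_scale[OF G_sub]
    by (auto simp: psi_add psi_sc psi00 scale_right_distrib mult.commute)
  have Wstab: "\<forall>a\<in>G 0. \<forall>v\<in>W. br a v \<in> W"
  proof (intro ballI)
    fix a v assume a: "a \<in> G 0" and v: "v \<in> W"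
    have aV: "a \<in> V False" using a g0V by blast
    have "br a v \<in> G (1/2)" using brG'[OF aV a, of v "1/2" "1/2"] v by (simp add: W_def)
    moreover have "\<psi> (br a v) = sc l (br a v)" using psi_br psi_0[OF a] v by (simp add: W_def scR)
    ultimately show "br a v \<in> W" by (simp add: W_def)
  qed
  have "W = {0} \<or> W = G (1/2)"
    using irr Wsub Wstab unfolding half_irreducible_def by (auto simp: W_def)
  moreover have "w \<in> W" using w by (simp add: W_def)
  ultimately have WG: "W = G (1/2)" using w by blast
  have psih: "a \<in> G (1/2) \<Longrightarrow> \<psi> a = sc l a" for a using WG by (auto simp: W_def)
  obtain c a where ca: "c \<in> G (1/2)" "a \<in> G (1/2)" "br c a \<noteq> 0"
    using exists_bracket[OF Bl Br Bsl Bsr Bsym Binv Bnd irr1] by blast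
  have cV: "c \<in> V True" using ca ghV by blast
  have "br c a \<in> G 1" using brG'[OF cV ca(1) ca(2)] by simp
  then obtain k where k: "br c a = sc k e" using g1 by auto
  have "\<psi> (br c a) = sc (l * l) (br c a)" using psi_br psih ca by (simp add: scL scR)
  moreover have "\<psi> (br c a) = br c a" using k psi_sc psi_e by simp
  ultimately have "sc (l * l) (br c a) = sc 1 (br c a)" by simp
  then have "l * l = 1" using ca(3) scale_cancel_right[of "l * l" "br c a" 1] by simp
  then have l: "l = 1 \<or> l = -1"
    by (metis power2_eq_1_iff power2_eq_square)
  have psimh: "b \<in> G (-1/2) \<Longrightarrow> \<psi> b = sc l b" for b
  proof -
    assume b: "b \<in> G (-1/2)"
    define d where "d = \<psi> b - sc l b"
    have dG: "d \<in> G (-1/2)" unfolding d_def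
      by (intro subspace_diff[OF G_sub] subspace_scale[OF G_sub] psi_G b)
    have ebG: "br e b \<in> G (1/2)" using eGh b by simp
    have "br e d = \<psi> (br e b) - sc l (br e b)"
      using psi_br psi_e by (simp add: d_def brdiffR scR)
    also have "\<dots> = 0" using psih[OF ebG] by simp
    finally have "br e d = 0" .
    then have "sc (1/2) d = 0" using fe[OF dG] by simp
    then have "d = 0" by simp
    then show ?thesis by (simp add: d_def)
  qed
  have ph: "a \<in> G (1/2) \<or> a \<in> G (-1/2) \<Longrightarrow> \<phi>' a = sc l (\<phi> a)" for a
  proof -
    assume a: "a \<in> G (1/2) \<or> a \<in> G (-1/2)"
    have "\<phi>' a = \<psi> (\<phi> a)" by (simp add: \<psi>_def p1)
    also have "\<dots> = sc l (\<phi> a)"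
      using a psih psimh cl_G[of \<phi> a] p1 by blast
    finally show ?thesis .
  qed
  have p1e: "a \<in> G 1 \<or> a \<in> G (-1) \<Longrightarrow> \<phi>' a = \<phi> a" for a
    using g1 gm1 by (auto simp: p1 p2)
  have p0: "a \<in> G 0 \<Longrightarrow> \<phi>' a = \<phi> a" for a using agree by simp
  show ?thesis
    using l
  proof
    assume l1: "l = 1"
    have "\<phi>' a = \<phi> a" for a
    proof -
      obtain a1 a2 a3 a4 a5 where d: "a1 \<in> G (-1)" "a2 \<in> G (-1/2)" "a3 \<in> G 0" "a4 \<in> G (1/2)"
        "a5 \<in> G 1" "a = a1 + a2 + a3 + a4 + a5" using decomp by blast
      show ?thesis using d ph p1e p0 l1 by (simp add: p1 p2)
    qed
    then show ?thesis by auto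
  next
    assume l1: "l = -1"
    have "\<forall>j \<in> {-1, -1/2, 0, 1/2, 1::real}. \<forall>a \<in> G j. \<phi>' a = sc ((-1) powi \<lfloor>2 * j\<rfloor>) (\<phi> a)"
      by (rule final_neg[OF ph p1e p0 l1])
    then show ?thesis by blast
  qed
qed

end


theorem proposition4p2:
  fixes sc :: "complex \<Rightarrow> 'a::ab_group_add \<Rightarrow> 'a"
    and br :: "'a \<Rightarrow> 'a \<Rightarrow> 'a"
    and V :: "bool \<Rightarrow> 'a set"
    and e x f :: 'a
    and \<phi> \<phi>' :: "'a \<Rightarrow> 'a"
  assumes "basic_simple_lie_superalgebra sc br V"
    and "minimal_sl2_triple sc br V e x f"
    and "half_irreducible sc br x"
    and "almost_compact_involution sc br V e x f \<phi>"
    and "almost_compact_involution sc br V e x f \<phi>'"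
    and "\<forall>a \<in> ad_eig sc br x 0. \<phi> a = \<phi>' a"
  shows "\<phi>' = \<phi> \<or>
    (\<forall>j \<in> {-1, -1/2, 0, 1/2, 1::real}. \<forall>a \<in> ad_eig sc br x j.
        \<phi>' a = sc ((-1) powi \<lfloor>2 * j\<rfloor>) (\<phi> a))"
proof -
  have L: "lie_superalgebra sc br V" and fd: "finite_dim sc" and hf: "has_invariant_form sc br V"
    using assms(1) by (auto simp: basic_simple_lie_superalgebra_def simple_lie_superalgebra_def)
  note Lc = L[unfolded lie_superalgebra_def]
  note Mc = assms(2)[unfolded minimal_sl2_triple_def]
  note L1 = Lc[THEN conjunct1]
  note L2 = Lc[THEN conjunct2, THEN conjunct1]
  note L5 = Lc[THEN conjunct2, THEN conjunct2, THEN conjunct2, THEN conjunct2, THEN conjunct1]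
  note L6 = Lc[THEN conjunct2, THEN conjunct2, THEN conjunct2, THEN conjunct2, THEN conjunct2, THEN conjunct1]
  note L7 = Lc[THEN conjunct2, THEN conjunct2, THEN conjunct2, THEN conjunct2, THEN conjunct2, THEN conjunct2, THEN conjunct1]
  note L8 = Lc[THEN conjunct2, THEN conjunct2, THEN conjunct2, THEN conjunct2, THEN conjunct2, THEN conjunct2, THEN conjunct2, THEN conjunct1]
  note L9 = Lc[THEN conjunct2, THEN conjunct2, THEN conjunct2, THEN conjunct2, THEN conjunct2, THEN conjunct2, THEN conjunct2, THEN conjunct2, THEN conjunct1]
  note L10 = Lc[THEN conjunct2, THEN conjunct2, THEN conjunct2, THEN conjunct2, THEN conjunct2, THEN conjunct2, THEN conjunct2, THEN conjunct2, THEN conjunct2, THEN conjunct1]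
  note L11 = Lc[THEN conjunct2, THEN conjunct2, THEN conjunct2, THEN conjunct2, THEN conjunct2, THEN conjunct2, THEN conjunct2, THEN conjunct2, THEN conjunct2, THEN conjunct2]
  have LSI: "LS sc br V e x f"
    by (rule LS.intro[OF L1 LS_axioms.intro[OF L5[rule_format] L6[rule_format] L7[rule_format]
        L8[rule_format] L9[rule_format] L10[rule_format] L11[rule_format] L2[rule_format]
        Mc[THEN conjunct1] Mc[THEN conjunct2, THEN conjunct1] Mc[THEN conjunct2, THEN conjunct2, THEN conjunct1] Mc[THEN conjunct2, THEN conjunct2, THEN conjunct2, THEN conjunct1] Mc[THEN conjunct2, THEN conjunct2, THEN conjunct2, THEN conjunct2, THEN conjunct1] Mc[THEN conjunct2, THEN conjunct2, THEN conjunct2, THEN conjunct2, THEN conjunct2, THEN conjunct1] Mc[THEN conjunct2, THEN conjunct2, THEN conjunct2, THEN conjunct2, THEN conjunct2, THEN conjunct2, THEN conjunct1] Mc[THEN conjunct2, THEN conjunct2, THEN conjunct2, THEN conjunct2, THEN conjunct2, THEN conjunct2, THEN conjunct2, THEN conjunct1] Mc[THEN conjunct2, THEN conjunct2, THEN conjunct2, THEN conjunct2, THEN conjunct2, THEN conjunct2, THEN conjunct2, THEN conjunct2, THEN conjunct1] Mc[THEN conjunct2, THEN conjunct2, THEN conjunct2, THEN conjunct2, THEN conjunct2, THEN conjunct2, THEN conjunct2, THEN conjunct2, THEN conjunct2, THEN conjunct1] Mc[THEN conjunct2, THEN conjunct2, THEN conjunct2, THEN conjunct2, THEN conjunct2,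 THEN conjunct2, THEN conjunct2, THEN conjunct2, THEN conjunct2, THEN conjunct2, THEN conjunct1] Mc[THEN conjunct2, THEN conjunct2, THEN conjunct2, THEN conjunct2, THEN conjunct2, THEN conjunct2, THEN conjunct2, THEN conjunct2, THEN conjunct2, THEN conjunct2, THEN conjunct2]]])
  obtain BB where BB: "finite BB" "module.span sc BB = UNIV"
    using fd unfolding finite_dim_def by blast
  obtain Bf :: "'a \<Rightarrow> 'a \<Rightarrow> complex" where H:
    "(\<forall>a b c. Bf (a + b) c = Bf a c + Bf b c) \<and>
     (\<forall>a b c. Bf a (b + c) = Bf a b + Bf a c) \<and>
     (\<forall>k a b. Bf (sc k a) b = k * Bf a b) \<and>
     (\<forall>k a b. Bf a (sc k b) = k * Bf a b) \<and>
     (\<forall>a b. a \<in> V False \<longrightarrow> b \<in> V True \<longrightarrow> Bf a b = 0 \<and> Bf b a = 0) \<and>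
     (\<forall>p q a b. a \<in> V p \<longrightarrow> b \<in> V q \<longrightarrow> Bf a b = super_sign p q * Bf b a) \<and>
     (\<forall>a b c. Bf (br a b) c = Bf a (br b c)) \<and>
     (\<forall>a. (\<forall>b. Bf a b = 0) \<longrightarrow> a = 0)"
    using hf unfolding has_invariant_form_def by (elim exE) (erule that)
  note Bl = H[THEN conjunct1, rule_format]
  note Br = H[THEN conjunct2, THEN conjunct1, rule_format]
  note Bsl = H[THEN conjunct2, THEN conjunct2, THEN conjunct1, rule_format]
  note Bsr = H[THEN conjunct2, THEN conjunct2, THEN conjunct2, THEN conjunct1, rule_format]
  note Bsym = H[THEN conjunct2, THEN conjunct2, THEN conjunct2, THEN conjunct2, THEN conjunct2, THEN conjunct1, rule_format]
  note Binv = H[THEN conjunct2, THEN conjunct2, THEN conjunct2, THEN conjunct2, THEN conjunct2, THEN conjunct2, THEN conjunct1, rule_format]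
  note Bnd = H[THEN conjunct2, THEN conjunct2, THEN conjunct2, THEN conjunct2, THEN conjunct2, THEN conjunct2, THEN conjunct2, THEN spec, THEN mp]
  have p1: "\<And>a b. \<phi> (a + b) = \<phi> a + \<phi> b" "\<And>k a. \<phi> (sc k a) = sc (cnj k) (\<phi> a)"
      "\<And>a b. \<phi> (br a b) = br (\<phi> a) (\<phi> b)" "\<And>a. \<phi> (\<phi> a) = a"
      "\<phi> e = e" "\<phi> x = x" "\<phi> f = f"
    using assms(4) unfolding almost_compact_involution_def conj_linear_involution_def by auto
  have p2: "\<And>a b. \<phi>' (a + b) = \<phi>' a + \<phi>' b" "\<And>k a. \<phi>' (sc k a) = sc (cnj k) (\<phi>' a)"
      "\<And>a b. \<phi>' (br a b) = br (\<phi>' a) (\<phi>' b)" "\<And>a. \<phi>' (\<phi>' a) = a"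
      "\<phi>' e = e" "\<phi>' x = x" "\<phi>' f = f"
    using assms(5) unfolding almost_compact_involution_def conj_linear_involution_def by auto
  show ?thesis
    by (rule LS.main[OF LSI Bl Br Bsl Bsr Bsym Binv Bnd BB assms(3) p1 p2 assms(6)])
qed


end
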